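(* For every integer $s$, the polynomial $F_s(t)= t^4 + (4s^3 - 4s^2 + 8s - 4)t^3 + (-6s^2 - 6)t^2 + 4t + 1$ is irreducible in $\mathbb{Q}[t]$. *)

theory Defs
  imports "HOL-Computational_Algebra.Polynomial_Factorial"
begin

definition F :: "int \<Rightarrow> rat poly" where
  "F s = [: 1, 4, - 6 * of_int s ^ 2 - 6,
            4 * of_int s ^ 3 - 4 * of_int s ^ 2 + 8 * of_int s - 4, 1 :]"

end

theory Submission
  imports Defs "Berlekamp_Zassenhaus.Factor_Bound"
begin

lemma int_cases5: fixes s :: int assumes "\<bar>s\<bar> \<le> 2" shows "s = -2 \<or> s = -1 \<or> s = 0 \<or> s = 1 \<or> s = 2"
  using assms by auto

lemma root1: fixes s :: int shows "4*s^3-10*s^2+8*s-4 \<noteq> 0"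
proof
  assume h: "4*s^3-10*s^2+8*s-4 = 0"
  have "s dvd 2" unfolding dvd_def using h by (intro exI[of _ "2*s^2-5*s+4"]) (simp add: algebra_simps power2_eq_square power3_eq_cube)
  hence "\<bar>s\<bar> \<le> 2" using dvd_imp_le_int[of 2 s] by simp
  from int_cases5[OF this] show False by (elim disjE) (use h in simp_all)
qed

lemma sq_ge: fixes s :: int shows "s \<le> s^2"
proof (cases "s \<le> 0")
  case True then show ?thesis by (meson order_trans zero_le_power2)
next
  case False
  hence "s * 1 \<le> s * s" by (intro mult_left_mono) auto
  then show ?thesis by (simp add: power2_eq_square)
qed

lemma cub2: fixes s :: int assumes "4*s^3-4*s^2+8*s-4 = -4" shows "s = 0"
proof -
  have "s*(s^2-s+2) = 0" using assms by (simp add: algebra_simps power2_eq_square power3_eq_cube)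
  moreover have "s^2-s+2 \<noteq> 0" using sq_ge[of s] by linarith
  ultimately show ?thesis by simp
qed

lemma sq8: fixes x :: int shows "x^2 \<noteq> 8"
proof
  assume h: "x^2 = 8"
  have "\<bar>x\<bar> \<le> 2"
  proof (rule ccontr)
    assume "\<not> \<bar>x\<bar> \<le> 2" hence "3 \<le> \<bar>x\<bar>" by simp
    hence "3^2 \<le> \<bar>x\<bar>^2" by (rule power_mono) simp
    thus False using h by simp
  qed
  from int_cases5[OF this] show False by (elim disjE) (use h in simp_all)
qed

lemma sq18: fixes x :: int shows "x^2 \<noteq> 18"
proof
  assume h: "x^2 = 18"
  have "\<bar>x\<bar> \<le> 4"
  proof (rule ccontr)
    assume "\<not> \<bar>x\<bar> \<le> 4" hence "5 \<le> \<bar>x\<bar>" by simp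
    hence "5^2 \<le> \<bar>x\<bar>^2" by (rule power_mono) simp
    thus False using h by simp
  qed
  hence "x = -4 \<or> x = -3 \<or> x = -2 \<or> x = -1 \<or> x = 0 \<or> x = 1 \<or> x = 2 \<or> x = 3 \<or> x = 4" by linarith
  thus False by (elim disjE) (use h in simp_all)
qed

lemma root2: fixes s :: int shows "-4*s^3-2*s^2-8*s-4 \<noteq> 0"
proof
  assume h: "-4*s^3-2*s^2-8*s-4 = 0"
  have "-4*s^3-2*s^2-8*s-4 = -2*(2*s+1)*(s^2+2)" by (simp add: algebra_simps power2_eq_square power3_eq_cube)
  moreover have "2*s+1 \<noteq> 0" by presburger
  moreover have "s^2+2 \<noteq> 0" by (smt (verit) zero_le_power2)
  ultimately show False using h by simp
qed


lemma cub1: fixes s :: int assumes "4*s^3-4*s^2+8*s-4 = 4" shows "s = 1"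
proof -
  have "(s-1)*(s^2+2) = 0" using assms by (simp add: algebra_simps power2_eq_square power3_eq_cube)
  moreover have "s^2+2 \<noteq> 0" by (smt (verit) zero_le_power2)
  ultimately show ?thesis by simp
qed



lemma lin_form: fixes g :: "'a::comm_ring_1 poly" assumes "degree g = 1"
  shows "g = [:Polynomial.coeff g 0, Polynomial.coeff g 1:]"
proof (rule poly_eqI)
  fix n show "Polynomial.coeff g n = Polynomial.coeff [:Polynomial.coeff g 0, Polynomial.coeff g 1:] n"
  proof (cases "n \<le> 1")
    case True
    then have "n = 0 \<or> n = 1" by auto
    then show ?thesis by auto
  next
    case False
    define m where "m = n - 2"
    have n: "n = Suc (Suc m)" using False unfolding m_def by simp
    have "Polynomial.coeff g n = 0" using False assms by (intro coeff_eq_0) simp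
    then show ?thesis unfolding n by simp
  qed
qed

lemma quad_form: fixes g :: "'a::comm_ring_1 poly" assumes "degree g = 2"
  shows "g = [:Polynomial.coeff g 0, Polynomial.coeff g 1, Polynomial.coeff g 2:]"
proof (rule poly_eqI)
  fix n show "Polynomial.coeff g n = Polynomial.coeff [:Polynomial.coeff g 0, Polynomial.coeff g 1, Polynomial.coeff g 2:] n"
  proof (cases "n \<le> 2")
    case True
    then have "n = 0 \<or> n = 1 \<or> n = 2" by auto
    then show ?thesis by (auto simp: numeral_2_eq_2)
  next
    case False
    define m where "m = n - 3"
    have n: "n = Suc (Suc (Suc m))" using False unfolding m_def by simp
    have "Polynomial.coeff g n = 0" using False assms by (intro coeff_eq_0) simp
    then show ?thesis unfolding n by simp
  qed
qed

lemma pm: "([:a0,a1,a2:] :: int poly) * [:b0,b1,b2:] = [:a0*b0, a0*b1+a1*b0, a0*b2+a1*b1+a2*b0, a1*b2+a2*b1, a2*b2:]"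
  by (simp add: algebra_simps)

definition P :: "int \<Rightarrow> int poly" where
  "P s = [: 1, 4, - 6 * s ^ 2 - 6, 4 * s ^ 3 - 4 * s ^ 2 + 8 * s - 4, 1 :]"

lemma F_P: "F s = of_int_poly (P s)"
  by (simp add: F_def P_def)

lemma degP: "degree (P s) = 4" by (simp add: P_def)
lemma lcP: "lead_coeff (P s) = 1" by (simp add: P_def)
lemma c0P: "Polynomial.coeff (P s) 0 = 1" by (simp add: P_def)
lemma P1: "poly (P s) 1 = 4*s^3-10*s^2+8*s-4" by (simp add: P_def algebra_simps)
lemma Pm1: "poly (P s) (-1) = -4*s^3-2*s^2-8*s-4" by (simp add: P_def algebra_simps)

lemma nolin: assumes gh: "P s = g * h" and dg: "degree g = 1" shows False
proof -
  define a where "a = Polynomial.coeff g 0"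
  define b where "b = Polynomial.coeff g 1"
  have g: "g = [:a, b:]" unfolding a_def b_def by (rule lin_form[OF dg])
  have "b * lead_coeff h = 1" using lcP[of s] unfolding gh lead_coeff_mult using dg b_def by simp
  hence b: "b = 1 \<or> b = -1" by (auto simp: zmult_eq_1_iff)
  have "a * Polynomial.coeff h 0 = 1" using c0P[of s] unfolding gh coeff_mult_0 a_def by simp
  hence a: "a = 1 \<or> a = -1" by (auto simp: zmult_eq_1_iff)
  have "poly g (-a*b) = 0" using a b unfolding g by auto
  hence "poly (P s) (-a*b) = 0" unfolding gh by simp
  moreover have "-a*b = 1 \<or> -a*b = -1" using a b by auto
  ultimately show False using root1[of s] root2[of s] P1[of s] Pm1[of s] by auto
qed

lemma noquad: assumes gh: "P s = g * h" and dg: "degree g = 2" and dh: "degree h = 2" shows False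
proof -
  define a0 where "a0 = Polynomial.coeff g 0"
  define a1 where "a1 = Polynomial.coeff g 1"
  define a2 where "a2 = Polynomial.coeff g 2"
  define b0 where "b0 = Polynomial.coeff h 0"
  define b1 where "b1 = Polynomial.coeff h 1"
  define b2 where "b2 = Polynomial.coeff h 2"
  have g: "g = [:a0, a1, a2:]" unfolding a0_def a1_def a2_def by (rule quad_form[OF dg])
  have h: "h = [:b0, b1, b2:]" unfolding b0_def b1_def b2_def by (rule quad_form[OF dh])
  have "P s = [:a0*b0, a0*b1+a1*b0, a0*b2+a1*b1+a2*b0, a1*b2+a2*b1, a2*b2:]"
    unfolding gh g h pm ..
  hence e0: "a0*b0 = 1" and e1: "a0*b1+a1*b0 = 4" and e2: "a0*b2+a1*b1+a2*b0 = - 6 * s ^ 2 - 6"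
    and e3: "a1*b2+a2*b1 = 4 * s ^ 3 - 4 * s ^ 2 + 8 * s - 4" and e4: "a2*b2 = 1"
    unfolding P_def by simp_all
  from e0 have A: "(a0 = 1 \<and> b0 = 1) \<or> (a0 = -1 \<and> b0 = -1)" by (simp add: zmult_eq_1_iff)
  from e4 have B: "(a2 = 1 \<and> b2 = 1) \<or> (a2 = -1 \<and> b2 = -1)" by (simp add: zmult_eq_1_iff)
  from A B show False
  proof (elim disjE conjE)
    assume "a0 = 1" "b0 = 1" "a2 = 1" "b2 = 1"
    hence s1: "b1 = 4 - a1" "4 * s ^ 3 - 4 * s ^ 2 + 8 * s - 4 = 4" "2 + a1*b1 = - 6 * s ^ 2 - 6" using e1 e2 e3 by auto
    hence "s = 1" using cub1 by blast
    hence "a1*(4-a1) = -14" using s1 by simp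
    hence "(a1-2)^2 = 18" by (simp add: power2_eq_square algebra_simps)
    thus False using sq18 by blast
  next
    assume "a0 = 1" "b0 = 1" "a2 = -1" "b2 = -1"
    hence s1: "b1 = 4 - a1" "4 * s ^ 3 - 4 * s ^ 2 + 8 * s - 4 = -4" "-2 + a1*b1 = - 6 * s ^ 2 - 6" using e1 e2 e3 by auto
    hence "s = 0" using cub2 by blast
    hence "a1*(4-a1) = -4" using s1 by simp
    hence "(a1-2)^2 = 8" by (simp add: power2_eq_square algebra_simps)
    thus False using sq8 by blast
  next
    assume "a0 = -1" "b0 = -1" "a2 = 1" "b2 = 1"
    hence s1: "b1 = -4 - a1" "4 * s ^ 3 - 4 * s ^ 2 + 8 * s - 4 = -4" "-2 + a1*b1 = - 6 * s ^ 2 - 6" using e1 e2 e3 by auto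
    hence "s = 0" using cub2 by blast
    hence "a1*(-4-a1) = -4" using s1 by simp
    hence "(a1+2)^2 = 8" by (simp add: power2_eq_square algebra_simps)
    thus False using sq8 by blast
  next
    assume "a0 = -1" "b0 = -1" "a2 = -1" "b2 = -1"
    hence s1: "b1 = -4 - a1" "4 * s ^ 3 - 4 * s ^ 2 + 8 * s - 4 = 4" "2 + a1*b1 = - 6 * s ^ 2 - 6" using e1 e2 e3 by auto
    hence "s = 1" using cub1 by blast
    hence "a1*(-4-a1) = -14" using s1 by simp
    hence "(a1+2)^2 = 18" by (simp add: power2_eq_square algebra_simps)
    thus False using sq18 by blast
  qed
qed

lemma nofactor: assumes gh: "P s = g * h" and "0 < degree g" "degree g < 4" "0 < degree h" "degree h < 4"
  shows False
proof -
  have "g \<noteq> 0" "h \<noteq> 0" using assms by auto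
  hence "degree g + degree h = 4" using degP[of s] unfolding gh by (simp add: degree_mult_eq)
  hence "degree g = 1 \<or> degree h = 1 \<or> (degree g = 2 \<and> degree h = 2)" using assms by linarith
  moreover have "P s = h * g" using gh by (simp add: mult.commute)
  ultimately show False using nolin noquad gh by blast
qed

theorem mainTheorem4:
  fixes s :: int
  shows "irreducible (F s)"
proof -
  have "irreducible\<^sub>d (F s)"
  proof (rule irreducible\<^sub>dI)
    show "0 < degree (F s)" unfolding F_P using degP[of s] by simp
  next
    fix q r :: "rat poly"
    assume a: "0 < degree q" "degree q < degree (F s)" "0 < degree r" "degree r < degree (F s)" "F s = q * r"
    have dF: "degree (F s) = 4" unfolding F_P using degP[of s] by simp
    from rat_to_int_factor[OF a(5)[unfolded F_P]] obtain g h where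
      "P s = g * h" "degree g = degree q" "degree h = degree r" by blast
    thus False using nofactor[of s g h] a(1-4) unfolding dF by simp
  qed
  thus ?thesis by (simp add: irreducible_connect_field)
qed

end
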